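(* Let $d\ge k\ge2$, $n\ge1$, $\Delta>0$, and let $\sigma:\mathbb{R}\to\mathbb{R}$ be a measurable function applied entrywise. Let the readout be dense with equal entries, $\mathbf v=k^{-1/2}(1,\dots,1)\in\mathbb{R}^k$. Let $\mathbf W^0\in\mathbb{R}^{k\times d}$ be drawn uniformly from the Stiefel manifold of $k\times d$ matrices with orthonormal rows, with rows $\mathbf w^0_1,\dots,\mathbf w^0_k$. Let $\mathbf x_\mu\sim\mathcal N(0,\mathbf I_d)$ and $z_\mu\sim\mathcal N(0,1)$, $\mu\in[n]$, be i.i.d. and independent of $\mathbf W^0$, and let the data be $\mathcal D=(\mathbf x_\mu,y^{\rm out}_\mu)_{\mu\in[n]}$ with $y^{\rm out}_\mu=\mathbf v^\top\sigma(\mathbf W^0\mathbf x_\mu)+\sqrt\Delta\,z_\mu$. Let $\mathbf W^1$ (with rows $\mathbf w^1_j$) be a sample from the posterior $P(\mathbf W\mid\mathcal D)\propto\nu(\mathbf W)\prod_{\mu\le n}\exp\!\big(-\tfrac{1}{2\Delta}(y^{\rm out}_\mu-\mathbf v^\top\sigma(\mathbf W\mathbf x_\mu))^2\big)$, where $\nu$ is the uniform measure on the Stiefel manifold, and let $\mathbb{E}\langle\cdot\rangle$ denote expectation over $\mathcal D,\mathbf W^0$ and the posterior sample. Then there is an absolute constant $C>0$ such that for all $i\neq j$ in $[k]$, $\mathbb{E}\langle(\mathbf w^0_i\cdot\mathbf w^1_j)^2\rangle\le C/k$; in particular this is $O(d^{-1})$ when $k=\Theta(d)$.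
   Context: $\langle\cdot\rangle$ denotes expectation with respect to the posterior distribution $P(\mathbf W\mid\mathcal D)$ given above; $\mathbb{E}$ denotes expectation over the data and the teacher weights $\mathbf W^0$. *)

theory Defs
  imports "HOL-Probability.Probability"
begin

text \<open>Matrices of size k x d are encoded as extensional functions on
  the index set {..<k} x {..<d} (rows are indexed by the first component).\<close>

definition mat_space :: "nat \<Rightarrow> nat \<Rightarrow> ((nat \<times> nat) \<Rightarrow> real) measure" where
  "mat_space k d = PiM ({..<k} \<times> {..<d}) (\<lambda>_. lborel)"

definition N01 :: "real measure" where
  "N01 = density lborel (\<lambda>x. ennreal (std_normal_density x))"

definition gauss_iid :: "'i set \<Rightarrow> ('i \<Rightarrow> real) measure" where
  "gauss_iid I = PiM I (\<lambda>_. N01)"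

definition stiefel :: "nat \<Rightarrow> nat \<Rightarrow> ((nat \<times> nat) \<Rightarrow> real) set" where
  "stiefel k d = {W \<in> extensional ({..<k} \<times> {..<d}).
     \<forall>i<k. \<forall>j<k. (\<Sum>l<d. W (i,l) * W (j,l)) = (if i = j then 1 else 0)}"

definition orthogonal_mat :: "nat \<Rightarrow> ((nat \<times> nat) \<Rightarrow> real) \<Rightarrow> bool" where
  "orthogonal_mat d Q \<longleftrightarrow> Q \<in> extensional ({..<d} \<times> {..<d}) \<and>
     (\<forall>i<d. \<forall>j<d. (\<Sum>l<d. Q (l,i) * Q (l,j)) = (if i = j then 1 else 0))"

definition rmul :: "nat \<Rightarrow> nat \<Rightarrow> ((nat \<times> nat) \<Rightarrow> real) \<Rightarrow> ((nat \<times> nat) \<Rightarrow> real)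
                    \<Rightarrow> ((nat \<times> nat) \<Rightarrow> real)" where
  "rmul k d W Q = (\<lambda>(i,j) \<in> {..<k} \<times> {..<d}. \<Sum>l<d. W (i,l) * Q (l,j))"

text \<open>The uniform (Haar) probability measure on the Stiefel manifold:
  a probability measure on k x d matrices concentrated on the Stiefel manifold
  and invariant under right multiplication by orthogonal matrices
  (this characterises it uniquely, since O(d) acts transitively).\<close>
definition uniform_stiefel :: "nat \<Rightarrow> nat \<Rightarrow> ((nat \<times> nat) \<Rightarrow> real) measure \<Rightarrow> bool" where
  "uniform_stiefel k d \<nu> \<longleftrightarrow> prob_space \<nu> \<and> sets \<nu> = sets (mat_space k d) \<and>
     emeasure \<nu> (stiefel k d) = 1 \<and>
     (\<forall>Q. orthogonal_mat d Q \<longrightarrow> distr \<nu> (mat_space k d) (\<lambda>W. rmul k d W Q) = \<nu>)"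

definition net_out :: "nat \<Rightarrow> nat \<Rightarrow> (real \<Rightarrow> real) \<Rightarrow> ((nat \<times> nat) \<Rightarrow> real)
                       \<Rightarrow> (nat \<Rightarrow> real) \<Rightarrow> real" where
  "net_out k d \<sigma> W x = (\<Sum>j<k. (1 / sqrt (real k)) * \<sigma> (\<Sum>l<d. W (j,l) * x l))"

definition likelihood :: "nat \<Rightarrow> nat \<Rightarrow> nat \<Rightarrow> real \<Rightarrow> (real \<Rightarrow> real)
     \<Rightarrow> ((nat \<times> nat) \<Rightarrow> real) \<Rightarrow> (nat \<Rightarrow> real) \<Rightarrow> ((nat \<times> nat) \<Rightarrow> real) \<Rightarrow> real" where
  "likelihood k d n \<Delta> \<sigma> X Y W =
     (\<Prod>\<mu><n. exp (- (Y \<mu> - net_out k d \<sigma> W (\<lambda>l. X (\<mu>,l)))\<^sup>2 / (2 * \<Delta>)))"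

definition posterior :: "nat \<Rightarrow> nat \<Rightarrow> nat \<Rightarrow> real \<Rightarrow> (real \<Rightarrow> real)
     \<Rightarrow> ((nat \<times> nat) \<Rightarrow> real) measure \<Rightarrow> ((nat \<times> nat) \<Rightarrow> real) \<Rightarrow> (nat \<Rightarrow> real)
     \<Rightarrow> ((nat \<times> nat) \<Rightarrow> real) measure" where
  "posterior k d n \<Delta> \<sigma> \<nu> X Y =
     density \<nu> (\<lambda>W. ennreal (likelihood k d n \<Delta> \<sigma> X Y W /
                              (\<integral>W'. likelihood k d n \<Delta> \<sigma> X Y W' \<partial>\<nu>)))"

definition labels :: "nat \<Rightarrow> nat \<Rightarrow> real \<Rightarrow> (real \<Rightarrow> real) \<Rightarrow> ((nat \<times> nat) \<Rightarrow> real)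
     \<Rightarrow> ((nat \<times> nat) \<Rightarrow> real) \<Rightarrow> (nat \<Rightarrow> real) \<Rightarrow> (nat \<Rightarrow> real)" where
  "labels k d \<Delta> \<sigma> W0 X Z = (\<lambda>\<mu>. net_out k d \<sigma> W0 (\<lambda>l. X (\<mu>,l)) + sqrt \<Delta> * Z \<mu>)"

end

theory Submission
  imports Defs "HOL-Computational_Algebra.Polynomial"
begin

definition dotv :: "nat \<Rightarrow> (nat \<Rightarrow> real) \<Rightarrow> (nat \<Rightarrow> real) \<Rightarrow> real" where
  "dotv d x y = (\<Sum>l<d. x l * y l)"

function gs :: "nat \<Rightarrow> (nat \<Rightarrow> nat \<Rightarrow> real) \<Rightarrow> nat \<Rightarrow> nat \<Rightarrow> real" where
  "gs d U m = (let r = (\<lambda>l. U m l - (\<Sum>j<m. dotv d (U m) (gs d U j) * gs d U j l))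
               in (\<lambda>l. r l / sqrt (dotv d r r)))"
  by auto
termination by (relation "Wellfounded.measure (\<lambda>(d,U,m). m)") auto

declare gs.simps[simp del]

definition resid :: "nat \<Rightarrow> (nat \<Rightarrow> nat \<Rightarrow> real) \<Rightarrow> nat \<Rightarrow> nat \<Rightarrow> real" where
  "resid d U m = (\<lambda>l. U m l - (\<Sum>j<m. dotv d (U m) (gs d U j) * gs d U j l))"

lemma gs_eq: "gs d U m = (\<lambda>l. resid d U m l / sqrt (dotv d (resid d U m) (resid d U m)))"
  by (subst gs.simps) (simp add: resid_def Let_def)

lemma dotv_comm: "dotv d x y = dotv d y x"
  unfolding dotv_def by (simp add: mult.commute)

lemma dotv_diff_right: "dotv d x (\<lambda>l. a l - b l) = dotv d x a - dotv d x b"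
  unfolding dotv_def by (simp add: right_diff_distrib sum_subtractf)

lemma dotv_sum_right: "dotv d x (\<lambda>l. \<Sum>j\<in>J. c j * y j l) = (\<Sum>j\<in>J. c j * dotv d x (y j))"
  unfolding dotv_def by (simp add: sum_distrib_left sum_distrib_right mult_ac sum.swap[of _ J])

lemma dotv_div_right: "dotv d x (\<lambda>l. y l / c) = dotv d x y / c"
  unfolding dotv_def by (simp add: sum_divide_distrib)

lemma dotv_div_left: "dotv d (\<lambda>l. y l / c) x = dotv d y x / c"
  unfolding dotv_def by (simp add: sum_divide_distrib)

lemma dotv_cong: "(\<And>l. l < d \<Longrightarrow> x l = x' l) \<Longrightarrow> (\<And>l. l < d \<Longrightarrow> y l = y' l) \<Longrightarrow> dotv d x y = dotv d x' y'"
  unfolding dotv_def by (rule sum.cong) auto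

lemma dotv_self_nonneg: "dotv d x x \<ge> 0"
  unfolding dotv_def by (simp add: sum_nonneg)

lemma gs_orth:
  assumes "\<forall>j<m. dotv d (resid d U j) (resid d U j) \<noteq> 0"
  shows "\<forall>i<m. \<forall>j<m. dotv d (gs d U i) (gs d U j) = (if i = j then 1 else 0)"
  using assms
proof (induction m)
  case 0
  then show ?case by simp
next
  case (Suc m)
  then have IH: "\<forall>i<m. \<forall>j<m. dotv d (gs d U i) (gs d U j) = (if i = j then 1 else 0)" by simp
  define r where "r = resid d U m"
  have rn: "dotv d r r \<noteq> 0" using Suc.prems r_def by auto
  have rpos: "dotv d r r > 0" using rn dotv_self_nonneg[of d r] by linarith
  have gm: "gs d U m = (\<lambda>l. r l / sqrt (dotv d r r))" using gs_eq r_def by simp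
  have perp: "dotv d (gs d U i) r = 0" if "i < m" for i
  proof -
    have "dotv d (gs d U i) r = dotv d (gs d U i) (U m) -
       (\<Sum>j<m. dotv d (U m) (gs d U j) * dotv d (gs d U i) (gs d U j))"
      unfolding r_def resid_def by (simp add: dotv_diff_right dotv_sum_right)
    also have "(\<Sum>j<m. dotv d (U m) (gs d U j) * dotv d (gs d U i) (gs d U j)) = dotv d (U m) (gs d U i)"
    proof -
      have "(\<Sum>j<m. dotv d (U m) (gs d U j) * dotv d (gs d U i) (gs d U j)) =
            (\<Sum>j<m. if j = i then dotv d (U m) (gs d U i) else 0)"
        by (rule sum.cong) (use IH that in auto)
      then show ?thesis using that by simp
    qed
    finally show ?thesis by (simp add: dotv_comm)
  qed
  have A: "dotv d (gs d U i) (gs d U m) = 0" if "i < m" for i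
    using perp[OF that] by (simp add: gm dotv_div_right)
  have B: "dotv d (gs d U m) (gs d U i) = 0" if "i < m" for i
    using A[OF that] by (simp add: dotv_comm)
  moreover have "dotv d (gs d U m) (gs d U m) = 1"
  proof -
    have "dotv d (gs d U m) (gs d U m) = dotv d r r / sqrt (dotv d r r) / sqrt (dotv d r r)"
      by (simp add: gm dotv_div_right dotv_div_left)
    also have "\<dots> = dotv d r r / (sqrt (dotv d r r) * sqrt (dotv d r r))"
      by (simp only: divide_divide_eq_left)
    also have "\<dots> = 1" using rpos by (simp only: real_sqrt_mult_self) simp
    finally show ?thesis .
  qed
  ultimately show ?case using IH A B
    by (auto simp: less_Suc_eq)
qed

definition vmul :: "nat \<Rightarrow> (nat \<Rightarrow> real) \<Rightarrow> (nat \<times> nat \<Rightarrow> real) \<Rightarrow> nat \<Rightarrow> real" where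
  "vmul d x H = (\<lambda>l. if l < d then (\<Sum>b<d. x b * H (b,l)) else 0)"

definition rows_orth :: "nat \<Rightarrow> (nat \<times> nat \<Rightarrow> real) \<Rightarrow> bool" where
  "rows_orth d H \<longleftrightarrow> (\<forall>a<d. \<forall>b<d. (\<Sum>l<d. H (a,l) * H (b,l)) = (if a = b then 1 else 0))"

lemma dotv_vmul:
  assumes "rows_orth d H"
  shows "dotv d (vmul d x H) (vmul d y H) = dotv d x y"
proof -
  have "dotv d (vmul d x H) (vmul d y H) = (\<Sum>l<d. (\<Sum>b<d. x b * H (b,l)) * (\<Sum>c<d. y c * H (c,l)))"
    unfolding dotv_def vmul_def by simp
  also have "\<dots> = (\<Sum>l<d. \<Sum>b<d. \<Sum>c<d. x b * y c * (H (b,l) * H (c,l)))"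
    unfolding sum_product by (intro sum.cong refl) (simp add: ac_simps)
  also have "\<dots> = (\<Sum>b<d. \<Sum>l<d. \<Sum>c<d. x b * y c * (H (b,l) * H (c,l)))"
    by (rule sum.swap)
  also have "\<dots> = (\<Sum>b<d. \<Sum>c<d. \<Sum>l<d. x b * y c * (H (b,l) * H (c,l)))"
    by (rule sum.cong[OF refl], rule sum.swap)
  also have "\<dots> = (\<Sum>b<d. \<Sum>c<d. x b * y c * (\<Sum>l<d. H (b,l) * H (c,l)))"
    by (simp add: sum_distrib_left)
  also have "\<dots> = (\<Sum>b<d. \<Sum>c<d. if b = c then x b * y b else 0)"
    using assms unfolding rows_orth_def by (intro sum.cong refl) auto
  also have "\<dots> = dotv d x y" unfolding dotv_def by simp
  finally show ?thesis .
qed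

lemma vmul_diff: "l < d \<Longrightarrow> vmul d (\<lambda>l. a l - b l) H l = vmul d a H l - vmul d b H l"
  unfolding vmul_def by (simp add: left_diff_distrib sum_subtractf)

lemma vmul_sum: "l < d \<Longrightarrow> vmul d (\<lambda>l. \<Sum>j\<in>J. c j * y j l) H l = (\<Sum>j\<in>J. c j * vmul d (y j) H l)"
  unfolding vmul_def by (simp add: sum_distrib_left sum_distrib_right mult_ac sum.swap[of _ J])

lemma vmul_div: "vmul d (\<lambda>l. y l / c) H l = vmul d y H l / c"
  unfolding vmul_def by (simp add: sum_divide_distrib)

lemma gs_equiv:
  assumes H: "rows_orth d H"
  shows "\<forall>l<d. gs d (\<lambda>m. vmul d (U m) H) m l = vmul d (gs d U m) H l \<and>
          resid d (\<lambda>m. vmul d (U m) H) m l = vmul d (resid d U m) H l"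
proof (induction m rule: less_induct)
  case (less m)
  define U' where "U' = (\<lambda>m. vmul d (U m) H)"
  have IH: "\<And>j l. j < m \<Longrightarrow> l < d \<Longrightarrow> gs d U' j l = vmul d (gs d U j) H l"
    using less U'_def by auto
  have dj: "dotv d (U' m) (gs d U' j) = dotv d (U m) (gs d U j)" if "j < m" for j
  proof -
    have "dotv d (U' m) (gs d U' j) = dotv d (vmul d (U m) H) (vmul d (gs d U j) H)"
      using IH[OF that] unfolding U'_def by (intro dotv_cong) auto
    then show ?thesis using dotv_vmul[OF H] by simp
  qed
  have R: "resid d U' m l = vmul d (resid d U m) H l" if "l < d" for l
  proof -
    have "resid d U' m l = U' m l - (\<Sum>j<m. dotv d (U m) (gs d U j) * vmul d (gs d U j) H l)"
      unfolding resid_def using IH dj that by (intro arg_cong2[where f="(-)"] sum.cong) auto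
    also have "\<dots> = vmul d (resid d U m) H l"
      unfolding resid_def using that by (simp add: vmul_diff vmul_sum U'_def)
    finally show ?thesis .
  qed
  have N: "dotv d (resid d U' m) (resid d U' m) = dotv d (resid d U m) (resid d U m)"
  proof -
    have "dotv d (resid d U' m) (resid d U' m) = dotv d (vmul d (resid d U m) H) (vmul d (resid d U m) H)"
      using R by (intro dotv_cong) auto
    then show ?thesis using dotv_vmul[OF H] by simp
  qed
  show ?case
  proof (intro allI impI conjI)
    fix l assume l: "l < d"
    show "resid d (\<lambda>m. vmul d (U m) H) m l = vmul d (resid d U m) H l" using R[OF l] U'_def by simp
    show "gs d (\<lambda>m. vmul d (U m) H) m l = vmul d (gs d U m) H l"
      using R[OF l] N unfolding U'_def[symmetric] by (simp add: gs_eq vmul_div)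
  qed
qed

lemma gs_dep: "(\<And>i. i \<le> m \<Longrightarrow> U i = U' i) \<Longrightarrow> gs d U m = gs d U' m"
proof (induction m rule: less_induct)
  case (less m)
  have "gs d U j = gs d U' j" if "j < m" for j using less that by auto
  moreover have "U m = U' m" using less by auto
  ultimately have "resid d U m = resid d U' m" unfolding resid_def
    by (intro ext arg_cong2[where f="(-)"] sum.cong) auto
  then show ?case by (simp add: gs_eq)
qed

lemma resid_dep: "(\<And>i. i \<le> m \<Longrightarrow> U i = U' i) \<Longrightarrow> resid d U m = resid d U' m"
proof -
  assume a: "\<And>i. i \<le> m \<Longrightarrow> U i = U' i"
  have "gs d U j = gs d U' j" if "j < m" for j using gs_dep[of j U U'] a that by auto
  moreover have "U m = U' m" using a by auto
  ultimately show ?thesis unfolding resid_def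
    by (intro ext arg_cong2[where f="(-)"] sum.cong) auto
qed

lemma dotv_diff_left: "dotv d (\<lambda>l. a l - b l) x = dotv d a x - dotv d b x"
  unfolding dotv_def by (simp add: left_diff_distrib sum_subtractf)

lemma dotv_sum_left: "dotv d (\<lambda>l. \<Sum>j\<in>J. c j * y j l) x = (\<Sum>j\<in>J. c j * dotv d (y j) x)"
  unfolding dotv_def by (simp add: sum_distrib_left sum_distrib_right mult_ac sum.swap[of _ J])

lemma delta_dot: "(c::nat) < d \<Longrightarrow> (\<Sum>l<d. (if l = c then 1 else 0) * f l) = (f c :: real)"
proof -
  assume c: "c < d"
  have "(\<Sum>l<d. (if l = c then 1 else 0) * f l) = (\<Sum>l<d. if l = c then f l else 0)"
    by (intro sum.cong) auto
  then show ?thesis using c by simp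
qed

lemma delta_sum: "(i::nat) < d \<Longrightarrow> (\<Sum>l<d. (if l = i then 1 else 0) * (if l = j then 1 else 0)) = (if i = j then 1 else (0::real))"
  by (simp add: delta_dot)

definition orthn :: "nat \<Rightarrow> nat \<Rightarrow> (nat \<Rightarrow> nat \<Rightarrow> real) \<Rightarrow> bool" where
  "orthn d m s \<longleftrightarrow> (\<forall>i<m. \<forall>j<m. dotv d (s i) (s j) = (if i = j then 1 else 0))"

lemma orthn_sum: "orthn d m s \<Longrightarrow> i < m \<Longrightarrow> (\<Sum>j<m. c j * dotv d (s j) (s i)) = c i"
proof -
  assume o: "orthn d m s" and i: "i < m"
  have "(\<Sum>j<m. c j * dotv d (s j) (s i)) = (\<Sum>j<m. if j = i then c i else 0)"
    using o i unfolding orthn_def by (intro sum.cong) auto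
  then show ?thesis using i by simp
qed

lemma bessel:
  assumes o: "orthn d m s"
  shows "(\<Sum>j<m. (dotv d x (s j))\<^sup>2) \<le> dotv d x x"
proof -
  define c where "c j = dotv d x (s j)" for j
  define e where "e = (\<lambda>l. x l - (\<Sum>j<m. c j * s j l))"
  have pe: "dotv d (\<lambda>l. \<Sum>j<m. c j * s j l) (s i) = c i" if "i < m" for i
    by (simp add: dotv_sum_left orthn_sum[OF o that])
  define p where "p = (\<lambda>l. \<Sum>j<m. c j * s j l)"
  have "dotv d e e = dotv d x x - dotv d x p - (dotv d p x - dotv d p p)"
    unfolding e_def p_def by (simp only: dotv_diff_left dotv_diff_right)
  moreover have xp: "dotv d x p = (\<Sum>j<m. (c j)\<^sup>2)"
    unfolding p_def by (simp add: dotv_sum_right c_def power2_eq_square)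
  moreover have "dotv d p x = (\<Sum>j<m. (c j)\<^sup>2)" using xp by (simp add: dotv_comm)
  moreover have "dotv d p p = (\<Sum>j<m. (c j)\<^sup>2)"
  proof -
    have "dotv d p p = (\<Sum>j<m. c j * dotv d p (s j))"
      unfolding p_def[symmetric] by (subst (2) p_def) (simp add: dotv_sum_right)
    also have "\<dots> = (\<Sum>j<m. (c j)\<^sup>2)" using pe unfolding p_def by (simp add: power2_eq_square)
    finally show ?thesis .
  qed
  ultimately have "dotv d e e = dotv d x x - (\<Sum>j<m. (c j)\<^sup>2)" by simp
  then show ?thesis using dotv_self_nonneg[of d e] by (simp add: c_def)
qed

lemma dotv_self_zero: "dotv d x x = 0 \<Longrightarrow> l < d \<Longrightarrow> x l = 0"
proof -
  assume z: "dotv d x x = 0" and l: "l < d"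
  have "\<forall>i\<in>{..<d}. x i * x i = 0"
    using z unfolding dotv_def by (subst sum_nonneg_eq_0_iff[symmetric]) auto
  then show ?thesis using l by auto
qed

lemma perp_exists:
  assumes o: "orthn d m s" and md: "m < d"
  shows "\<exists>a. (\<exists>l<d. a l \<noteq> 0) \<and> (\<forall>j<m. dotv d a (s j) = 0)"
proof (rule ccontr)
  assume na: "\<not> ?thesis"
  define a where "a c = (\<lambda>l. (if l = c then 1 else 0) - (\<Sum>j<m. s j c * s j l))" for c :: nat
  have perp: "dotv d (a c) (s i) = 0" if "c < d" "i < m" for c i
  proof -
    have "dotv d (\<lambda>l. if l = c then 1 else 0) (s i) = s i c"
      unfolding dotv_def using that by (simp add: delta_dot)
    then show ?thesis unfolding a_def
      by (simp add: dotv_diff_left dotv_sum_left orthn_sum[OF o that(2)])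
  qed
  have z: "a c c = 0" if "c < d" for c using na perp that by blast
  have "(\<Sum>c<d. 1::real) = (\<Sum>c<d. \<Sum>j<m. s j c * s j c)"
    using z unfolding a_def by (intro sum.cong) auto
  also have "\<dots> = (\<Sum>j<m. dotv d (s j) (s j))"
    unfolding dotv_def by (rule sum.swap)
  also have "\<dots> = (\<Sum>j<m. 1)" using o unfolding orthn_def by (intro sum.cong) auto
  finally have "real d = real m" by simp
  then show False using md by simp
qed

lemma resid_zero_perp:
  assumes z: "dotv d (resid d U m) (resid d U m) = 0"
    and a: "\<forall>j<m. dotv d a (gs d U j) = 0"
  shows "dotv d a (U m) = 0"
proof -
  have "dotv d a (U m) = dotv d a (\<lambda>l. resid d U m l + (\<Sum>j<m. dotv d (U m) (gs d U j) * gs d U j l))"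
    unfolding resid_def by simp
  also have "\<dots> = dotv d a (\<lambda>l. (\<Sum>j<m. dotv d (U m) (gs d U j) * gs d U j l))"
    using dotv_self_zero[OF z] by (intro dotv_cong) auto
  also have "\<dots> = 0" using a by (simp add: dotv_sum_right)
  finally show ?thesis .
qed

definition hh :: "nat \<Rightarrow> (nat \<Rightarrow> real) \<Rightarrow> (nat \<times> nat \<Rightarrow> real)" where
  "hh d D = (\<lambda>(l,m)\<in>{..<d}\<times>{..<d}. (if l = m then 1 else 0) - 2 / dotv d D D * D l * D m)"

lemma hh_cols:
  assumes "i < d" "j < d"
  shows "(\<Sum>l<d. hh d D (l,i) * hh d D (l,j)) = (if i = j then 1 else 0)"
proof -
  define n where "n = dotv d D D"
  define c where "c = 2 / n"
  have "(\<Sum>l<d. hh d D (l,i) * hh d D (l,j)) =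
     (\<Sum>l<d. (if l = i then 1 else 0) * (if l = j then 1 else 0)) - c * D i * D j - c * D j * D i
      + c * c * D i * D j * n"
  proof -
    have "(\<Sum>l<d. hh d D (l,i) * hh d D (l,j)) = (\<Sum>l<d. (if l = i then 1 else 0) * (if l = j then 1 else 0)
       - (if l = i then c * D l * D j else 0) - (if l = j then c * D l * D i else 0) + c * c * D i * D j * (D l * D l))"
      using assms unfolding hh_def c_def n_def by (intro sum.cong) (auto simp: algebra_simps)
    also have "\<dots> = (\<Sum>l<d. (if l = i then 1 else 0) * (if l = j then 1 else 0)) - c * D i * D j - c * D j * D i
      + c * c * D i * D j * n"
      using assms by (simp add: sum.distrib sum_subtractf sum_distrib_left n_def dotv_def)
    finally show ?thesis .
  qed
  also have "\<dots> = (if i = j then 1 else 0)"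
  proof (cases "n = 0")
    case True
    then show ?thesis using assms by (simp add: c_def delta_sum)
  next
    case False
    then have "c * c * n = 2 * c" by (simp add: c_def power2_eq_square)
    then have "c * c * D i * D j * n = 2 * c * D i * D j" by (metis mult.assoc mult.commute)
    then show ?thesis using assms by (simp add: algebra_simps delta_sum)
  qed
  finally show ?thesis .
qed

lemma hh_sym: "hh d D (a,b) = hh d D (b,a)"
  unfolding hh_def by (auto simp: mult_ac)

lemma hh_orth: "orthogonal_mat d (hh d D)"
  unfolding orthogonal_mat_def using hh_cols by (auto simp: hh_def)

lemma hh_rows: "rows_orth d (hh d D)"
  unfolding rows_orth_def using hh_cols hh_sym by (metis (no_types, lifting) sum.cong)

lemma vmul_hh: "l < d \<Longrightarrow> vmul d x (hh d D) l = x l - 2 / dotv d D D * dotv d x D * D l"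
proof -
  assume l: "l < d"
  have "vmul d x (hh d D) l = (\<Sum>b<d. (if b = l then x b else 0) - 2 / dotv d D D * D l * (x b * D b))"
    unfolding vmul_def hh_def using l by (intro if_P sum.cong refl | simp add: algebra_simps)+
  also have "\<dots> = x l - 2 / dotv d D D * D l * dotv d x D"
  proof -
    have "(\<Sum>b<d. 2 / dotv d D D * D l * (x b * D b)) = 2 / dotv d D D * D l * dotv d x D"
      unfolding dotv_def by (simp add: sum_distrib_left)
    then show ?thesis using l by (simp add: sum_subtractf)
  qed
  finally show ?thesis by simp
qed

lemma meas_entry[measurable]:
  "a < k \<Longrightarrow> b < d \<Longrightarrow> (\<lambda>W. W (a,b)) \<in> borel_measurable (mat_space k d)"
  unfolding mat_space_def
  using measurable_component_singleton[of "(a,b)" "{..<k}\<times>{..<d}" "\<lambda>_. lborel"] by simp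

lemma meas_row_dot[measurable]:
  "a < k \<Longrightarrow> (\<lambda>W. dotv d x (\<lambda>l. W (a,l))) \<in> borel_measurable (mat_space k d)"
  unfolding dotv_def 
  by (intro borel_measurable_sum borel_measurable_times borel_measurable_const meas_entry) auto
lemma meas_rmul:
  "(\<lambda>W. rmul k d W Q) \<in> measurable (mat_space k d) (mat_space k d)"
  unfolding rmul_def 
  apply (subst (2) mat_space_def)
  apply (rule measurable_restrict)
  apply clarsimp
  done

lemma us_prob: "uniform_stiefel k d \<nu> \<Longrightarrow> prob_space \<nu>"
  unfolding uniform_stiefel_def by simp

lemma us_sets: "uniform_stiefel k d \<nu> \<Longrightarrow> sets \<nu> = sets (mat_space k d)"
  unfolding uniform_stiefel_def by simp

lemma us_space: "uniform_stiefel k d \<nu> \<Longrightarrow> space \<nu> = space (mat_space k d)"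
  by (rule sets_eq_imp_space_eq[OF us_sets])

lemma us_inv: "uniform_stiefel k d \<nu> \<Longrightarrow> orthogonal_mat d Q \<Longrightarrow> distr \<nu> (mat_space k d) (\<lambda>W. rmul k d W Q) = \<nu>"
  unfolding uniform_stiefel_def by simp

lemma us_AE: "uniform_stiefel k d \<nu> \<Longrightarrow> AE W in \<nu>. W \<in> stiefel k d"
proof -
  assume u: "uniform_stiefel k d \<nu>"
  interpret prob_space \<nu> using us_prob[OF u] .
  have e: "emeasure \<nu> (stiefel k d) = 1" using u unfolding uniform_stiefel_def by simp
  then have "stiefel k d \<in> sets \<nu>" using emeasure_notin_sets by fastforce
  moreover have "prob (stiefel k d) = 1" using e by (simp add: emeasure_eq_measure)
  ultimately show ?thesis by (intro AE_prob_1) simp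
qed

lemma us_meas_cong: "uniform_stiefel k d \<nu> \<Longrightarrow> measurable \<nu> N = measurable (mat_space k d) N"
  by (rule measurable_cong_sets[OF us_sets refl])

lemma us_meas_cong2: "uniform_stiefel k d \<nu> \<Longrightarrow> measurable N \<nu> = measurable N (mat_space k d)"
  by (rule measurable_cong_sets[OF refl us_sets])

lemma space_mat: "space (mat_space k d) = PiE ({..<k}\<times>{..<d}) (\<lambda>_. UNIV)"
  unfolding mat_space_def by (simp add: space_PiM)

lemma rmul_space: "rmul k d W Q \<in> space (mat_space k d)"
  unfolding space_mat rmul_def by auto

lemma rmul_apply: "a < k \<Longrightarrow> b < d \<Longrightarrow> rmul k d W Q (a,b) = (\<Sum>l<d. W (a,l) * Q (l,b))"
  unfolding rmul_def by simp

lemma dotv_pos: "(\<exists>l<d. a l \<noteq> 0) \<Longrightarrow> dotv d a a > 0"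
  using dotv_self_zero dotv_self_nonneg by (metis order_le_less)

lemma dotv_delta: "c < d \<Longrightarrow> dotv d x (\<lambda>l. if l = c then 1 else 0) = x c"
  unfolding dotv_def using delta_dot[of c d x] by (simp add: mult.commute)

lemma hyper_equal:
  assumes u: "uniform_stiefel k d \<nu>" and k: "0 < k" and a: "\<exists>l<d. a l \<noteq> 0"
  shows "emeasure \<nu> {W \<in> space \<nu>. dotv d a (\<lambda>l. W (0,l)) = 0} = emeasure \<nu> {W \<in> space \<nu>. W (0,0) = 0}"
proof -
  have d: "0 < d" using a by auto
  define n where "n = dotv d a a"
  have n: "n > 0" using dotv_pos[OF a] n_def by simp
  define ah where "ah = (\<lambda>l. a l / sqrt n)"
  have ahah: "dotv d ah ah = 1"
  proof -
    have "dotv d ah ah = n / sqrt n / sqrt n" unfolding ah_def n_def by (simp add: dotv_div_left dotv_div_right)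
    also have "\<dots> = 1" using n by (simp add: divide_divide_eq_left)
    finally show ?thesis .
  qed
  define e0 where "e0 = (\<lambda>l::nat. if l = 0 then 1 else (0::real))"
  define D where "D = (\<lambda>l. ah l - e0 l)"
  define H where "H = hh d D"
  have DD: "dotv d D D = 2 - 2 * ah 0"
  proof -
    have "dotv d D D = dotv d ah ah - dotv d ah e0 - (dotv d e0 ah - dotv d e0 e0)"
      unfolding D_def by (simp only: dotv_diff_left dotv_diff_right)
    moreover have "dotv d ah e0 = ah 0" using d unfolding e0_def by (simp add: dotv_delta)
    moreover have "dotv d e0 ah = ah 0" using d dotv_comm[of d e0 ah] unfolding e0_def by (simp add: dotv_delta)
    moreover have "dotv d e0 e0 = 1" using d unfolding e0_def by (simp add: dotv_delta)
    ultimately show ?thesis using ahah by simp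
  qed
  have col: "H (l,0) = ah l" if l: "l < d" for l
  proof (cases "dotv d D D = 0")
    case True
    then have "D l = 0" using dotv_self_zero l by blast
    then show ?thesis using l d True unfolding H_def hh_def D_def e0_def by auto
  next
    case False
    then have "ah 0 \<noteq> 1" using DD by simp
    then have "2 - 2 * ah 0 \<noteq> 0" by simp
    then have c: "2 / dotv d D D * D 0 = -1" unfolding DD unfolding D_def e0_def by (simp add: field_simps)
    have "H (l,0) = e0 l - 2 / dotv d D D * D l * D 0"
      using l d unfolding H_def hh_def e0_def by simp
    also have "\<dots> = e0 l - 2 / dotv d D D * D 0 * D l" by (simp add: mult_ac)
    also have "\<dots> = ah l" using c unfolding D_def by simp
    finally show ?thesis .
  qed
  have set_eq: "{W \<in> space \<nu>. dotv d a (\<lambda>l. W (0,l)) = 0} = (\<lambda>W. rmul k d W H) -` {W \<in> space (mat_space k d). W (0,0) = 0} \<inter> space \<nu>"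
  proof -
    have "rmul k d W H (0,0) = dotv d a (\<lambda>l. W (0,l)) / sqrt n" for W
    proof -
      have "rmul k d W H (0,0) = (\<Sum>l<d. W (0,l) * ah l)" using k d col by (simp add: rmul_apply)
      also have "\<dots> = dotv d (\<lambda>l. W (0,l)) a / sqrt n" unfolding ah_def dotv_def by (simp add: sum_divide_distrib)
      finally show ?thesis by (simp add: dotv_comm)
    qed
    then show ?thesis using n rmul_space by auto
  qed
  have S0: "{W \<in> space (mat_space k d). W (0,0) = 0} \<in> sets (mat_space k d)"
    using meas_entry[OF k d] by measurable
  have "emeasure \<nu> {W \<in> space \<nu>. dotv d a (\<lambda>l. W (0,l)) = 0} =
        emeasure (distr \<nu> (mat_space k d) (\<lambda>W. rmul k d W H)) {W \<in> space (mat_space k d). W (0,0) = 0}"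
    unfolding set_eq
    by (rule emeasure_distr[symmetric, OF _ S0]) (simp add: us_meas_cong[OF u] meas_rmul)
  also have "\<dots> = emeasure \<nu> {W \<in> space (mat_space k d). W (0,0) = 0}"
    using us_inv[OF u hh_orth] H_def by simp
  finally show ?thesis using us_space[OF u] by simp
qed

lemma zero_set_sets: "f \<in> borel_measurable M \<Longrightarrow> {x \<in> space M. f x = (0::real)} \<in> sets M"
proof -
  assume f: "f \<in> borel_measurable M"
  have "f -` {0} \<inter> space M \<in> sets M" by (rule measurable_sets[OF f]) simp
  moreover have "{x \<in> space M. f x = (0::real)} = f -` {0} \<inter> space M" by auto
  ultimately show ?thesis by simp
qed

lemma stiefel_row_nz:
  assumes "W \<in> stiefel k d" "a < k" shows "\<exists>l<d. W (a,l) \<noteq> 0"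
proof (rule ccontr)
  assume "\<not> ?thesis"
  then have "(\<Sum>l<d. W (a,l) * W (a,l)) = 0" by simp
  then show False using assms unfolding stiefel_def by auto
qed

lemma root_count:
  fixes w :: "nat \<Rightarrow> real"
  assumes nz: "\<exists>l<d. w l \<noteq> 0"
  shows "card {t \<in> {..<N}. dotv d (\<lambda>l. (real t)^l) w = 0} \<le> d"
proof -
  define P where "P = (\<Sum>l<d. monom (w l) l)"
  have pv: "poly P x = dotv d (\<lambda>l. x^l) w" for x
    unfolding P_def dotv_def by (simp add: poly_sum poly_monom mult.commute)
  have cf: "coeff P i = (if i < d then w i else 0)" for i
    unfolding P_def by (simp add: coeff_sum)
  obtain l0 where l0: "l0 < d" "w l0 \<noteq> 0" using nz by auto
  have P0: "P \<noteq> 0" using cf[of l0] l0 by auto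
  have deg: "degree P \<le> d" using cf by (intro degree_le) auto
  have sub: "real ` {t \<in> {..<N}. dotv d (\<lambda>l. (real t)^l) w = 0} \<subseteq> {x. poly P x = 0}"
    using pv by auto
  have "card {t \<in> {..<N}. dotv d (\<lambda>l. (real t)^l) w = 0} = card (real ` {t \<in> {..<N}. dotv d (\<lambda>l. (real t)^l) w = 0})"
    by (rule card_image[symmetric]) (auto simp: inj_on_def)
  also have "\<dots> \<le> card {x. poly P x = 0}"
    by (rule card_mono[OF poly_roots_finite[OF P0] sub])
  also have "\<dots> \<le> degree P" by (rule card_poly_roots_bound[OF P0])
  finally show ?thesis using deg by simp
qed

lemma hyper_null:
  assumes u: "uniform_stiefel k d \<nu>" and k: "0 < k" and a: "\<exists>l<d. a l \<noteq> 0"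
  shows "emeasure \<nu> {W \<in> space \<nu>. dotv d a (\<lambda>l. W (0,l)) = 0} = 0"
proof -
  interpret prob_space \<nu> using us_prob[OF u] .
  have d: "0 < d" using a by auto
  define p where "p = emeasure \<nu> {W \<in> space \<nu>. W (0,0) = 0}"
  define A where "A t = {W \<in> space \<nu>. dotv d (\<lambda>l. (real t)^l) (\<lambda>l. W (0,l)) = 0}" for t :: nat
  have Ap: "emeasure \<nu> (A t) = p" for t
    unfolding A_def p_def by (rule hyper_equal[OF u k]) (use d in auto)
  have As: "A t \<in> sets \<nu>" for t
    unfolding A_def using meas_row_dot[OF k] us_meas_cong[OF u] by (intro zero_set_sets) auto
  have bound: "of_nat N * p \<le> of_nat d" for N
  proof -
    have "of_nat N * p = (\<Sum>t<N. emeasure \<nu> (A t))" using Ap by simp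
    also have "\<dots> = (\<integral>\<^sup>+W. (\<Sum>t<N. indicator (A t) W) \<partial>\<nu>)"
      using As by (simp add: nn_integral_sum)
    also have "\<dots> \<le> (\<integral>\<^sup>+W. of_nat d \<partial>\<nu>)"
    proof (rule nn_integral_mono_AE)
      show "AE W in \<nu>. (\<Sum>t<N. indicator (A t) W) \<le> (of_nat d :: ennreal)"
        using us_AE[OF u]
      proof eventually_elim
        case (elim W)
        have "(\<Sum>t<N. indicator (A t) W) = (\<Sum>t\<in>({..<N} \<inter> {t. W \<in> A t}). 1 :: ennreal)"
          by (simp add: indicator_def sum.If_cases)
        also have "\<dots> = of_nat (card ({..<N} \<inter> {t. W \<in> A t}))" by simp
        also have "\<dots> \<le> of_nat d"
        proof -
          have "({..<N} \<inter> {t. W \<in> A t}) \<subseteq> {t \<in> {..<N}. dotv d (\<lambda>l. (real t)^l) (\<lambda>l. W (0,l)) = 0}"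
            unfolding A_def by auto
          then have "card ({..<N} \<inter> {t. W \<in> A t}) \<le> card {t \<in> {..<N}. dotv d (\<lambda>l. (real t)^l) (\<lambda>l. W (0,l)) = 0}"
            by (intro card_mono) auto
          also have "\<dots> \<le> d" by (rule root_count[OF stiefel_row_nz[OF elim k]])
          finally show ?thesis by simp
        qed
        finally show ?case .
      qed
    qed
    also have "\<dots> = of_nat d" by (simp add: emeasure_space_1)
    finally show ?thesis .
  qed
  have pfin: "p = ennreal (measure \<nu> {W \<in> space \<nu>. W (0,0) = 0})"
    unfolding p_def by (simp add: emeasure_eq_measure)
  define q where "q = measure \<nu> {W \<in> space \<nu>. W (0,0) = 0}"
  have q0: "q \<ge> 0" unfolding q_def by simp
  have "q = 0"
  proof (rule ccontr)
    assume "q \<noteq> 0"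
    then have "q > 0" using q0 by simp
    then obtain N :: nat where N: "real d < real N * q"
      using reals_Archimedean3 by blast
    have "ennreal (real N * q) \<le> ennreal (real d)"
      using bound[of N] pfin q0 unfolding q_def[symmetric] by (simp add: ennreal_mult ennreal_of_nat_eq_real_of_nat)
    then have "real N * q \<le> real d" using q0 by (simp add: ennreal_le_iff)
    then show False using N by simp
  qed
  then have p0: "p = 0" using pfin q_def by simp
  show ?thesis using hyper_equal[OF u k a] p0 p_def by simp
qed

definition Uof :: "nat \<Rightarrow> (nat \<Rightarrow> (nat \<times> nat \<Rightarrow> real)) \<Rightarrow> nat \<Rightarrow> nat \<Rightarrow> real" where
  "Uof d V = (\<lambda>m l. if m < d \<and> l < d then V m (0,l) else 0)"

definition good :: "nat \<Rightarrow> (nat \<Rightarrow> nat \<Rightarrow> real) \<Rightarrow> bool" where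
  "good d U \<longleftrightarrow> (\<forall>m<d. dotv d (resid d U m) (resid d U m) \<noteq> 0)"

lemma dotv_meas:
  "(\<And>l. (\<lambda>x. f x l) \<in> borel_measurable M) \<Longrightarrow> (\<And>l. (\<lambda>x. g x l) \<in> borel_measurable M) \<Longrightarrow>
   (\<lambda>x. dotv d (f x) (g x)) \<in> borel_measurable M"
  unfolding dotv_def by (intro borel_measurable_sum borel_measurable_times) auto

lemma gs_meas:
  assumes F: "\<And>m l. (\<lambda>x. F x m l) \<in> borel_measurable M"
  shows "(\<lambda>x. gs d (F x) m l) \<in> borel_measurable M \<and> (\<lambda>x. resid d (F x) m l) \<in> borel_measurable M"
proof (induction m arbitrary: l rule: less_induct)
  case (less m)
  have R: "(\<lambda>x. resid d (F x) m l) \<in> borel_measurable M" for l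
    unfolding resid_def
    by (intro borel_measurable_diff borel_measurable_sum borel_measurable_times dotv_meas F)
       (use less in auto)
  have "(\<lambda>x. sqrt (dotv d (resid d (F x) m) (resid d (F x) m))) \<in> borel_measurable M"
    using measurable_compose[OF dotv_meas[OF R R] borel_measurable_sqrt] by (simp add: comp_def)
  then have "(\<lambda>x. gs d (F x) m l) \<in> borel_measurable M"
    unfolding gs_eq
    by (intro borel_measurable_divide R)
  then show ?case using R by auto
qed

lemma Uof_meas:
  assumes u: "uniform_stiefel k d \<nu>" and k: "0 < k"
  shows "(\<lambda>V. Uof d V m l) \<in> borel_measurable (PiM {..<d} (\<lambda>_. \<nu>))"
proof (cases "m < d \<and> l < d")
  case True
  have "(\<lambda>V. V m) \<in> measurable (PiM {..<d} (\<lambda>_. \<nu>)) \<nu>"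
    using True by (intro measurable_component_singleton) auto
  moreover have "(\<lambda>W. W (0,l)) \<in> borel_measurable \<nu>"
    using meas_entry[OF k, of l d] True unfolding us_meas_cong[OF u] by simp
  ultimately have "(\<lambda>V. V m (0,l)) \<in> borel_measurable (PiM {..<d} (\<lambda>_. \<nu>))"
    by (rule measurable_compose)
  then show ?thesis using True unfolding Uof_def by simp
next
  case False
  then have "(\<lambda>V. Uof d V m l) = (\<lambda>V. 0)" unfolding Uof_def by auto
  then show ?thesis by simp
qed

lemma good_AE:
  assumes u: "uniform_stiefel k d \<nu>" and k: "0 < k"
  shows "AE V in PiM {..<d} (\<lambda>_. \<nu>). good d (Uof d V)"
proof -
  interpret prob_space \<nu> using us_prob[OF u] .
  interpret P: product_prob_space "\<lambda>_::nat. \<nu>" by (rule product_prob_spaceI) (rule us_prob[OF u])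
  let ?P = "PiM {..<d} (\<lambda>_. \<nu>)"
  have resm: "(\<lambda>V. dotv d (resid d (Uof d V) j) (resid d (Uof d V) j)) \<in> borel_measurable ?P" for j
    by (rule dotv_meas; rule gs_meas[THEN conjunct2]; rule Uof_meas[OF u k])
  define E where "E m = {V \<in> space ?P. dotv d (resid d (Uof d V) m) (resid d (Uof d V) m) = 0 \<and>
      (\<forall>j<m. dotv d (resid d (Uof d V) j) (resid d (Uof d V) j) \<noteq> 0)}" for m
  have Es: "E m \<in> sets ?P" for m
  proof -
    have "Measurable.pred ?P (\<lambda>V. dotv d (resid d (Uof d V) m) (resid d (Uof d V) m) = 0 \<and>
      (\<forall>j<m. dotv d (resid d (Uof d V) j) (resid d (Uof d V) j) \<noteq> 0))"
      using resm by measurable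
    then show ?thesis unfolding E_def by (simp add: pred_def)
  qed
  have E0: "emeasure ?P (E m) = 0" if m: "m < d" for m
  proof -
    define I where "I = {..<d} - {m}"
    have ins: "{..<d} = insert m I" using m I_def by auto
    have mI: "m \<notin> I" "finite I" using I_def by auto
    have "emeasure ?P (E m) = (\<integral>\<^sup>+V. indicator (E m) V \<partial>?P)" using Es by simp
    also have "\<dots> = (\<integral>\<^sup>+x. (\<integral>\<^sup>+y. indicator (E m) (x(m := y)) \<partial>\<nu>) \<partial>PiM I (\<lambda>_. \<nu>))"
      unfolding ins by (rule P.product_nn_integral_insert[OF mI(2) mI(1)]) (use Es ins in simp)
    also have "\<dots> = (\<integral>\<^sup>+x. 0 \<partial>PiM I (\<lambda>_. \<nu>))"
    proof (rule nn_integral_cong)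
      fix x assume x: "x \<in> space (PiM I (\<lambda>_. \<nu>))"
      have Ueq: "Uof d (x(m := y)) i = Uof d x i" if "i < m" for i y
        using that unfolding Uof_def by auto
      have gseq: "gs d (Uof d (x(m := y))) j = gs d (Uof d x) j" if "j < m" for j y
        by (rule gs_dep) (use Ueq that in auto)
      have reseq: "resid d (Uof d (x(m := y))) j = resid d (Uof d x) j" if "j < m" for j y
        by (rule resid_dep) (use Ueq that in auto)
      show "(\<integral>\<^sup>+y. indicator (E m) (x(m := y)) \<partial>\<nu>) = 0"
      proof (cases "\<forall>j<m. dotv d (resid d (Uof d x) j) (resid d (Uof d x) j) \<noteq> 0")
        case False
        then have "indicator (E m) (x(m := y)) = (0::ennreal)" for y
          unfolding E_def using reseq by (auto simp: indicator_def)
        then show ?thesis by simp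
      next
        case True
        have o: "orthn d m (gs d (Uof d x))" unfolding orthn_def using gs_orth[OF True] .
        obtain a where a: "\<exists>l<d. a l \<noteq> 0" "\<forall>j<m. dotv d a (gs d (Uof d x) j) = 0"
          using perp_exists[OF o m] by blast
        have "(\<integral>\<^sup>+y. indicator (E m) (x(m := y)) \<partial>\<nu>) \<le>
              (\<integral>\<^sup>+y. indicator {W \<in> space \<nu>. dotv d a (\<lambda>l. W (0,l)) = 0} y \<partial>\<nu>)"
        proof (rule nn_integral_mono)
          fix y assume y: "y \<in> space \<nu>"
          show "indicator (E m) (x(m := y)) \<le> (indicator {W \<in> space \<nu>. dotv d a (\<lambda>l. W (0,l)) = 0} y :: ennreal)"
          proof (cases "x(m := y) \<in> E m")
            case True
            then have z: "dotv d (resid d (Uof d (x(m := y))) m) (resid d (Uof d (x(m := y))) m) = 0"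
              unfolding E_def by auto
            have "dotv d a (Uof d (x(m := y)) m) = 0"
              by (rule resid_zero_perp[OF z]) (use a gseq in auto)
            moreover have "dotv d a (Uof d (x(m := y)) m) = dotv d a (\<lambda>l. y (0,l))"
              using m by (intro dotv_cong) (auto simp: Uof_def)
            ultimately show ?thesis using y by (simp add: indicator_def)
          qed (simp add: indicator_def)
        qed
        also have "\<dots> = emeasure \<nu> {W \<in> space \<nu>. dotv d a (\<lambda>l. W (0,l)) = 0}"
          using meas_row_dot[OF k] us_meas_cong[OF u] by (intro nn_integral_indicator zero_set_sets) auto
        also have "\<dots> = 0" by (rule hyper_null[OF u k a(1)])
        finally show ?thesis by simp
      qed
    qed
    finally show ?thesis by simp
  qed
  have "AE V in ?P. \<forall>m\<in>{..<d}. V \<notin> E m"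
  proof (rule AE_finite_allI)
    fix m assume "m \<in> {..<d}"
    then show "AE V in ?P. V \<notin> E m"
      using E0 Es by (intro AE_I'[of "E m"]) (auto intro: null_setsI)
  qed simp
  then show ?thesis
  proof (rule AE_mp[OF _ AE_I2], intro impI)
    fix V assume V: "V \<in> space ?P" and nE: "\<forall>m\<in>{..<d}. V \<notin> E m"
    show "good d (Uof d V)"
    proof (rule ccontr)
      assume "\<not> good d (Uof d V)"
      then have ex: "\<exists>m. m < d \<and> dotv d (resid d (Uof d V) m) (resid d (Uof d V) m) = 0"
        unfolding good_def by auto
      define m0 where "m0 = (LEAST m. m < d \<and> dotv d (resid d (Uof d V) m) (resid d (Uof d V) m) = 0)"
      have m0: "m0 < d \<and> dotv d (resid d (Uof d V) m0) (resid d (Uof d V) m0) = 0"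
        unfolding m0_def using LeastI_ex[OF ex] .
      have "\<forall>j<m0. dotv d (resid d (Uof d V) j) (resid d (Uof d V) j) \<noteq> 0"
        using not_less_Least m0 unfolding m0_def by fastforce
      then have "V \<in> E m0" using m0 V unfolding E_def by auto
      then show False using nE m0 by auto
    qed
  qed
qed

lemma meas_rmul_gen:
  assumes f: "f \<in> measurable X (mat_space k d)" and g: "g \<in> measurable X (mat_space d d)"
  shows "(\<lambda>x. rmul k d (f x) (g x)) \<in> measurable X (mat_space k d)"
proof -
  have fe: "(\<lambda>x. f x (i,l)) \<in> borel_measurable X" if "i < k" "l < d" for i l
    using measurable_compose[OF f meas_entry[OF that]] .
  have ge: "(\<lambda>x. g x (l,j)) \<in> borel_measurable X" if "l < d" "j < d" for l j
    using measurable_compose[OF g meas_entry[OF that]] .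
  show ?thesis
    unfolding rmul_def
    apply (subst mat_space_def)
    apply (rule measurable_restrict)
    apply clarsimp
    apply (intro borel_measurable_sum borel_measurable_times fe ge)
       apply auto
    done
qed

definition Rmat :: "nat \<Rightarrow> (nat \<Rightarrow> nat \<Rightarrow> real) \<Rightarrow> (nat \<times> nat \<Rightarrow> real)" where
  "Rmat d U = (\<lambda>(l,c)\<in>{..<d}\<times>{..<d}. if good d U then gs d U c l else (if l = c then 1 else 0))"

lemma Rmat_orth: "orthogonal_mat d (Rmat d U)"
proof -
  have "(\<Sum>l<d. Rmat d U (l,i) * Rmat d U (l,j)) = (if i = j then 1 else 0)" if "i < d" "j < d" for i j
  proof (cases "good d U")
    case True
    have "(\<Sum>l<d. Rmat d U (l,i) * Rmat d U (l,j)) = dotv d (gs d U i) (gs d U j)"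
      using that True unfolding Rmat_def dotv_def by simp
    also have "\<dots> = (if i = j then 1 else 0)"
      using gs_orth[of d d U] True that unfolding good_def by auto
    finally show ?thesis .
  next
    case False
    then show ?thesis using that unfolding Rmat_def by (simp add: delta_sum)
  qed
  then show ?thesis unfolding orthogonal_mat_def Rmat_def by auto
qed

lemma Rmat_meas:
  assumes u: "uniform_stiefel k d \<nu>" and k: "0 < k"
  shows "(\<lambda>V. Rmat d (Uof d V)) \<in> measurable (PiM {..<d} (\<lambda>_. \<nu>)) (mat_space d d)"
proof -
  let ?P = "PiM {..<d} (\<lambda>_. \<nu>)"
  have resm: "(\<lambda>V. dotv d (resid d (Uof d V) j) (resid d (Uof d V) j)) \<in> borel_measurable ?P" for j
    by (rule dotv_meas; rule gs_meas[THEN conjunct2]; rule Uof_meas[OF u k])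
  have gm: "(\<lambda>V. gs d (Uof d V) c l) \<in> borel_measurable ?P" for c l
    by (rule gs_meas[THEN conjunct1]; rule Uof_meas[OF u k])
  have gd: "{V \<in> space ?P. good d (Uof d V)} \<in> sets ?P"
  proof -
    have "Measurable.pred ?P (\<lambda>V. \<forall>m<d. dotv d (resid d (Uof d V) m) (resid d (Uof d V) m) \<noteq> 0)"
      using resm by measurable
    then show ?thesis unfolding good_def pred_def by assumption
  qed
  have comp: "(\<lambda>V. if good d (Uof d V) then gs d (Uof d V) c l else (if l = c then 1 else 0)) \<in> borel_measurable ?P" for l c
    by (rule measurable_If[OF gm _ gd]) simp
  show ?thesis
    unfolding Rmat_def
    apply (subst mat_space_def)
    apply (rule measurable_restrict)
    subgoal for i by (cases i) (simp only: case_prod_conv measurable_lborel1, rule comp)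
    done
qed

definition Vh :: "nat \<Rightarrow> nat \<Rightarrow> (nat \<times> nat \<Rightarrow> real) \<Rightarrow> (nat \<Rightarrow> (nat \<times> nat \<Rightarrow> real)) \<Rightarrow> (nat \<Rightarrow> (nat \<times> nat \<Rightarrow> real))" where
  "Vh k d H V = (\<lambda>m\<in>{..<d}. rmul k d (V m) H)"

lemma Uof_Vh: "0 < k \<Longrightarrow> Uof d (Vh k d H V) = (\<lambda>m. vmul d (Uof d V m) H)"
  unfolding Uof_def Vh_def vmul_def by (auto simp: rmul_apply fun_eq_iff)

lemma P_inv:
  assumes u: "uniform_stiefel k d \<nu>" and H: "orthogonal_mat d H"
  shows "distr (PiM {..<d} (\<lambda>_. \<nu>)) (PiM {..<d} (\<lambda>_. \<nu>)) (Vh k d H) = PiM {..<d} (\<lambda>_. \<nu>)"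
proof -
  have pp: "product_prob_space (\<lambda>_::nat. \<nu>)" by (rule product_prob_spaceI) (rule us_prob[OF u])
  have fm: "(\<lambda>W. rmul k d W H) \<in> measurable \<nu> \<nu>"
    unfolding us_meas_cong[OF u] us_meas_cong2[OF u] by (rule meas_rmul)
  have "distr (PiM {..<d} (\<lambda>_. \<nu>)) (PiM {..<d} (\<lambda>_. \<nu>)) (compose {..<d} (\<lambda>W. rmul k d W H)) =
        PiM {..<d} (\<lambda>i. distr \<nu> \<nu> (\<lambda>W. rmul k d W H))"
    by (rule distr_PiM_finite_prob_space[OF _ pp pp fm]) simp
  also have "distr \<nu> \<nu> (\<lambda>W. rmul k d W H) = \<nu>"
  proof -
    have "distr \<nu> \<nu> (\<lambda>W. rmul k d W H) = distr \<nu> (mat_space k d) (\<lambda>W. rmul k d W H)"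
      by (rule distr_cong) (auto simp: us_sets[OF u])
    then show ?thesis using us_inv[OF u H] by simp
  qed
  finally show ?thesis unfolding Vh_def compose_def .
qed

definition sw :: "nat \<Rightarrow> nat \<Rightarrow> nat \<Rightarrow> nat" where
  "sw a b r = (if r = a then b else if r = b then a else r)"

definition swr :: "nat \<Rightarrow> nat \<Rightarrow> nat \<Rightarrow> nat \<Rightarrow> (nat \<times> nat \<Rightarrow> real) \<Rightarrow> (nat \<times> nat \<Rightarrow> real)" where
  "swr k d a b M = (\<lambda>(r,c)\<in>{..<k}\<times>{..<d}. M (sw a b r, c))"

lemma sw_lt: "a < k \<Longrightarrow> b < k \<Longrightarrow> r < k \<Longrightarrow> sw a b r < k"
  unfolding sw_def by auto

lemma meas_swr:
  assumes "a < k" "b < k"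
  shows "swr k d a b \<in> measurable (mat_space k d) (mat_space k d)"
  unfolding swr_def
  apply (subst (2) mat_space_def)
  apply (rule measurable_restrict)
  subgoal for i by (cases i) (simp only: case_prod_conv measurable_lborel1, rule meas_entry, auto intro: sw_lt assms)
  done

lemma stiefel_dot: "W \<in> stiefel k d \<Longrightarrow> r < k \<Longrightarrow> s < k \<Longrightarrow> dotv d (\<lambda>l. W (r,l)) (\<lambda>l. W (s,l)) = (if r = s then 1 else 0)"
  unfolding stiefel_def dotv_def by auto

lemma good_Vh:
  assumes k: "0 < k" and H: "rows_orth d H"
  shows "good d (Uof d (Vh k d H V)) = good d (Uof d V)"
proof -
  have "dotv d (resid d (Uof d (Vh k d H V)) m) (resid d (Uof d (Vh k d H V)) m) =
        dotv d (resid d (Uof d V) m) (resid d (Uof d V) m)" for m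
  proof -
    have "dotv d (resid d (Uof d (Vh k d H V)) m) (resid d (Uof d (Vh k d H V)) m) =
          dotv d (vmul d (resid d (Uof d V) m) H) (vmul d (resid d (Uof d V) m) H)"
      unfolding Uof_Vh[OF k] using gs_equiv[OF H, where U="Uof d V" and m=m] by (intro dotv_cong) auto
    then show ?thesis using dotv_vmul[OF H] by simp
  qed
  then show ?thesis unfolding good_def by simp
qed

lemma dotv_vmul_sym:
  assumes "\<And>a b. H (a,b) = H (b,a)"
  shows "dotv d x (vmul d y H) = dotv d (vmul d x H) y"
proof -
  have "dotv d x (vmul d y H) = (\<Sum>l<d. \<Sum>b<d. x l * y b * H (b,l))"
    unfolding dotv_def vmul_def by (simp add: sum_distrib_left mult_ac)
  also have "\<dots> = (\<Sum>b<d. \<Sum>l<d. x l * y b * H (b,l))" by (rule sum.swap)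
  also have "\<dots> = (\<Sum>b<d. (\<Sum>l<d. x l * H (l,b)) * y b)"
    by (intro sum.cong refl) (simp add: sum_distrib_right sum_distrib_left assms mult_ac)
  also have "\<dots> = dotv d (vmul d x H) y"
    unfolding dotv_def vmul_def by (intro sum.cong) auto
  finally show ?thesis .
qed

lemma vmul_row_swap:
  assumes W: "W \<in> stiefel k d" and ab: "a < k" "b < k" "a \<noteq> b" and r: "r < k" and l: "l < d"
  shows "vmul d (\<lambda>l. W (r,l)) (hh d (\<lambda>l. W (a,l) - W (b,l))) l = W (sw a b r, l)"
proof -
  define D where "D = (\<lambda>l. W (a,l) - W (b,l))"
  have rd: "dotv d (\<lambda>l. W (r,l)) D = (if r = a then 1 else 0) - (if r = b then 1 else 0)"
    unfolding D_def using stiefel_dot[OF W] ab r by (simp add: dotv_diff_right)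
  have DD: "dotv d D D = 2"
  proof -
    have "dotv d D D = dotv d (\<lambda>l. W (a,l)) D - dotv d (\<lambda>l. W (b,l)) D"
      by (subst (1) D_def) (simp only: dotv_diff_left)
    also have "\<dots> = 2"
      unfolding D_def using stiefel_dot[OF W] ab by (simp add: dotv_diff_right)
    finally show ?thesis .
  qed
  have "vmul d (\<lambda>l. W (r,l)) (hh d D) l = W (r,l) - dotv d (\<lambda>l. W (r,l)) D * D l"
    using vmul_hh[OF l] DD by simp
  also have "\<dots> = W (sw a b r, l)"
    using rd ab unfolding sw_def by (auto simp: D_def)
  finally show ?thesis unfolding D_def .
qed

lemma keyid:
  assumes k: "0 < k" and W: "W \<in> stiefel k d" and ab: "a < k" "b < k" "a \<noteq> b"
    and g: "good d (Uof d V)"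
  shows "swr k d a b (rmul k d W (Rmat d (Uof d V))) =
         rmul k d W (Rmat d (Uof d (Vh k d (hh d (\<lambda>l. W (a,l) - W (b,l))) V)))"
proof -
  define H where "H = hh d (\<lambda>l. W (a,l) - W (b,l))"
  have g': "good d (Uof d (Vh k d H V))" using good_Vh[OF k hh_rows] g H_def by simp
  have "swr k d a b (rmul k d W (Rmat d (Uof d V))) (r,c) = rmul k d W (Rmat d (Uof d (Vh k d H V))) (r,c)"
    if r: "r < k" and c: "c < d" for r c
  proof -
    have "swr k d a b (rmul k d W (Rmat d (Uof d V))) (r,c) = dotv d (\<lambda>l. W (sw a b r, l)) (gs d (Uof d V) c)"
      unfolding swr_def using r c sw_lt[OF ab(1,2) r] g by (simp add: rmul_apply Rmat_def dotv_def)
    also have "\<dots> = dotv d (vmul d (\<lambda>l. W (r,l)) H) (gs d (Uof d V) c)"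
      unfolding H_def using vmul_row_swap[OF W ab r] by (intro dotv_cong) auto
    also have "\<dots> = dotv d (\<lambda>l. W (r,l)) (vmul d (gs d (Uof d V) c) H)"
      unfolding H_def by (rule dotv_vmul_sym[symmetric]) (rule hh_sym)
    also have "\<dots> = dotv d (\<lambda>l. W (r,l)) (gs d (Uof d (Vh k d H V)) c)"
      unfolding Uof_Vh[OF k] using gs_equiv[OF hh_rows, where U="Uof d V" and m=c] H_def by (intro dotv_cong) auto
    also have "\<dots> = rmul k d W (Rmat d (Uof d (Vh k d H V))) (r,c)"
      using r c g' by (simp add: rmul_apply Rmat_def dotv_def)
    finally show ?thesis .
  qed
  then show ?thesis unfolding H_def[symmetric]
    by (auto simp: fun_eq_iff swr_def rmul_def)
qed

lemma Vh_meas: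
  assumes u: "uniform_stiefel k d \<nu>"
  shows "Vh k d H \<in> measurable (PiM {..<d} (\<lambda>_. \<nu>)) (PiM {..<d} (\<lambda>_. \<nu>))"
proof -
  have fm: "(\<lambda>W. rmul k d W H) \<in> measurable \<nu> \<nu>"
    unfolding us_meas_cong[OF u] us_meas_cong2[OF u] by (rule meas_rmul)
  show ?thesis
    unfolding Vh_def
    apply (rule measurable_restrict)
    apply (rule measurable_compose[OF _ fm])
    apply (rule measurable_component_singleton)
    apply simp
    done
qed

lemma stiefel_space: "W \<in> stiefel k d \<Longrightarrow> W \<in> space (mat_space k d)"
  unfolding stiefel_def space_mat by (auto simp: PiE_def)

lemma swap_int:
  assumes u: "uniform_stiefel k d \<nu>" and k: "0 < k" and ab: "a < k" "b < k" "a \<noteq> b"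
    and gm: "g \<in> borel_measurable (mat_space k d)"
  shows "(\<integral>\<^sup>+W. g (swr k d a b W) \<partial>\<nu>) = (\<integral>\<^sup>+W. g W \<partial>\<nu>)"
proof -
  let ?P = "PiM {..<d} (\<lambda>_. \<nu>)"
  define R where "R V = Rmat d (Uof d V)" for V
  interpret N: prob_space \<nu> using us_prob[OF u] .
  interpret PP: product_prob_space "\<lambda>_::nat. \<nu>" by (rule product_prob_spaceI) (rule us_prob[OF u])
  interpret P: prob_space ?P by (intro prob_space_PiM us_prob[OF u])
  interpret PS: pair_sigma_finite \<nu> ?P
    by (intro pair_sigma_finite.intro N.sigma_finite_measure_axioms P.sigma_finite_measure_axioms)
  have Rm: "R \<in> measurable ?P (mat_space d d)" unfolding R_def by (rule Rmat_meas[OF u k])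
  have sm: "swr k d a b \<in> measurable (mat_space k d) (mat_space k d)" by (rule meas_swr[OF ab(1,2)])
  have RM: "(\<lambda>p. rmul k d (fst p) (R (snd p))) \<in> measurable (\<nu> \<Otimes>\<^sub>M ?P) (mat_space k d)"
  proof (rule meas_rmul_gen)
    show "fst \<in> measurable (\<nu> \<Otimes>\<^sub>M ?P) (mat_space k d)"
      using measurable_fst[of \<nu> ?P] unfolding us_meas_cong2[OF u] .
    show "(\<lambda>x. R (snd x)) \<in> measurable (\<nu> \<Otimes>\<^sub>M ?P) (mat_space d d)"
      using measurable_compose[OF measurable_snd Rm] .
  qed
  have F1: "(\<lambda>(W,V). g (swr k d a b (rmul k d W (R V)))) \<in> borel_measurable (\<nu> \<Otimes>\<^sub>M ?P)"
    unfolding case_prod_unfold using measurable_compose[OF measurable_compose[OF RM sm] gm] .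
  have F2: "(\<lambda>(W,V). g (rmul k d W (R V))) \<in> borel_measurable (\<nu> \<Otimes>\<^sub>M ?P)"
    unfolding case_prod_unfold using measurable_compose[OF RM gm] .
  have gsm: "(\<lambda>W. g (swr k d a b W)) \<in> borel_measurable (mat_space k d)"
    using measurable_compose[OF sm gm] .
  have s1: "(\<integral>\<^sup>+W. g (swr k d a b (rmul k d W (R V))) \<partial>\<nu>) = (\<integral>\<^sup>+W. g (swr k d a b W) \<partial>\<nu>)" for V
  proof -
    have "(\<integral>\<^sup>+W. g (swr k d a b (rmul k d W (R V))) \<partial>\<nu>) =
          (\<integral>\<^sup>+W. g (swr k d a b W) \<partial>distr \<nu> (mat_space k d) (\<lambda>W. rmul k d W (R V)))"
      by (rule nn_integral_distr[symmetric]) (simp_all add: us_meas_cong[OF u] meas_rmul gsm)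
    also have "\<dots> = (\<integral>\<^sup>+W. g (swr k d a b W) \<partial>\<nu>)"
      using us_inv[OF u Rmat_orth] R_def by simp
    finally show ?thesis .
  qed
  have s6: "(\<integral>\<^sup>+W. g (rmul k d W (R V)) \<partial>\<nu>) = (\<integral>\<^sup>+W. g W \<partial>\<nu>)" for V
  proof -
    have "(\<integral>\<^sup>+W. g (rmul k d W (R V)) \<partial>\<nu>) =
          (\<integral>\<^sup>+W. g W \<partial>distr \<nu> (mat_space k d) (\<lambda>W. rmul k d W (R V)))"
      by (rule nn_integral_distr[symmetric]) (simp_all add: us_meas_cong[OF u] meas_rmul gm)
    also have "\<dots> = (\<integral>\<^sup>+W. g W \<partial>\<nu>)"
      using us_inv[OF u Rmat_orth] R_def by simp
    finally show ?thesis .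
  qed
  have s4: "(\<integral>\<^sup>+V. g (swr k d a b (rmul k d W (R V))) \<partial>?P) = (\<integral>\<^sup>+V. g (rmul k d W (R V)) \<partial>?P)"
    if W: "W \<in> stiefel k d" for W
  proof -
    define H where "H = hh d (\<lambda>l. W (a,l) - W (b,l))"
    have Wm: "(\<lambda>V. g (rmul k d W (R V))) \<in> borel_measurable ?P"
    proof -
      have "(\<lambda>V. rmul k d W (R V)) \<in> measurable ?P (mat_space k d)"
        by (rule meas_rmul_gen[OF measurable_const Rm]) (rule stiefel_space[OF W])
      then show ?thesis using measurable_compose gm by blast
    qed
    have "(\<integral>\<^sup>+V. g (swr k d a b (rmul k d W (R V))) \<partial>?P) = (\<integral>\<^sup>+V. g (rmul k d W (R (Vh k d H V))) \<partial>?P)"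
    proof (rule nn_integral_cong_AE)
      show "AE V in ?P. g (swr k d a b (rmul k d W (R V))) = g (rmul k d W (R (Vh k d H V)))"
        using good_AE[OF u k] by eventually_elim (simp add: R_def H_def keyid[OF k W ab])
    qed
    also have "\<dots> = (\<integral>\<^sup>+V. g (rmul k d W (R V)) \<partial>distr ?P ?P (Vh k d H))"
      by (rule nn_integral_distr[symmetric]) (simp_all add: Vh_meas[OF u] Wm)
    also have "\<dots> = (\<integral>\<^sup>+V. g (rmul k d W (R V)) \<partial>?P)"
      unfolding H_def by (simp add: P_inv[OF u hh_orth])
    finally show ?thesis .
  qed
  have "(\<integral>\<^sup>+W. g (swr k d a b W) \<partial>\<nu>) = (\<integral>\<^sup>+V. (\<integral>\<^sup>+W. g (swr k d a b W) \<partial>\<nu>) \<partial>?P)"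
    by (simp add: P.emeasure_space_1)
  also have "\<dots> = (\<integral>\<^sup>+V. (\<integral>\<^sup>+W. g (swr k d a b (rmul k d W (R V))) \<partial>\<nu>) \<partial>?P)"
    by (simp add: s1)
  also have "\<dots> = (\<integral>\<^sup>+W. (\<integral>\<^sup>+V. g (swr k d a b (rmul k d W (R V))) \<partial>?P) \<partial>\<nu>)"
    by (rule PS.Fubini'[OF F1])
  also have "\<dots> = (\<integral>\<^sup>+W. (\<integral>\<^sup>+V. g (rmul k d W (R V)) \<partial>?P) \<partial>\<nu>)"
    by (rule nn_integral_cong_AE) (use us_AE[OF u] in \<open>eventually_elim, simp add: s4\<close>)
  also have "\<dots> = (\<integral>\<^sup>+V. (\<integral>\<^sup>+W. g (rmul k d W (R V)) \<partial>\<nu>) \<partial>?P)"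
    by (rule PS.Fubini'[OF F2, symmetric])
  also have "\<dots> = (\<integral>\<^sup>+V. (\<integral>\<^sup>+W. g W \<partial>\<nu>) \<partial>?P)" by (simp add: s6)
  also have "\<dots> = (\<integral>\<^sup>+W. g W \<partial>\<nu>)" by (simp add: P.emeasure_space_1)
  finally show ?thesis .
qed

lemma swap_inv:
  assumes u: "uniform_stiefel k d \<nu>" and k: "0 < k" and ab: "a < k" "b < k" "a \<noteq> b"
  shows "distr \<nu> (mat_space k d) (swr k d a b) = \<nu>"
proof (rule measure_eqI)
  show "sets (distr \<nu> (mat_space k d) (swr k d a b)) = sets \<nu>" using us_sets[OF u] by simp
  fix A assume "A \<in> sets (distr \<nu> (mat_space k d) (swr k d a b))"
  then have A: "A \<in> sets (mat_space k d)" by simp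
  have sm: "swr k d a b \<in> measurable \<nu> (mat_space k d)"
    unfolding us_meas_cong[OF u] by (rule meas_swr[OF ab(1,2)])
  have "emeasure (distr \<nu> (mat_space k d) (swr k d a b)) A = (\<integral>\<^sup>+W. indicator A W \<partial>distr \<nu> (mat_space k d) (swr k d a b))"
    using A by simp
  also have "\<dots> = (\<integral>\<^sup>+W. indicator A (swr k d a b W) \<partial>\<nu>)"
    using A by (intro nn_integral_distr sm) simp
  also have "\<dots> = (\<integral>\<^sup>+W. indicator A W \<partial>\<nu>)"
    using A by (intro swap_int[OF u k ab]) simp
  also have "\<dots> = emeasure \<nu> A" using A us_sets[OF u] by simp
  finally show "emeasure (distr \<nu> (mat_space k d) (swr k d a b)) A = emeasure \<nu> A" .
qed

lemma sw_bij: "a < k \<Longrightarrow> b < k \<Longrightarrow> bij_betw (sw a b) {..<k} {..<k}"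
  by (rule bij_betw_byWitness[where f'="sw a b"]) (auto simp: sw_def)

lemma net_out_swr:
  assumes "a < k" "b < k"
  shows "net_out k d \<sigma> (swr k d a b W) x = net_out k d \<sigma> W x"
proof -
  have "net_out k d \<sigma> (swr k d a b W) x = (\<Sum>r<k. (1 / sqrt (real k)) * \<sigma> (\<Sum>l<d. W (sw a b r, l) * x l))"
  proof -
    have inner: "(\<Sum>l<d. swr k d a b W (r,l) * x l) = (\<Sum>l<d. W (sw a b r, l) * x l)" if "r < k" for r
      using that by (intro sum.cong) (auto simp: swr_def)
    show ?thesis unfolding net_out_def by (intro sum.cong refl) (simp add: inner)
  qed
  also have "\<dots> = net_out k d \<sigma> W x"
    unfolding net_out_def
    by (rule sum.reindex_bij_betw[OF sw_bij[OF assms], where g="\<lambda>r. (1 / sqrt (real k)) * \<sigma> (\<Sum>l<d. W (r, l) * x l)"])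
  finally show ?thesis .
qed

lemma lik_swr: "a < k \<Longrightarrow> b < k \<Longrightarrow> likelihood k d n \<Delta> \<sigma> X Y (swr k d a b W) = likelihood k d n \<Delta> \<sigma> X Y W"
  unfolding likelihood_def by (simp add: net_out_swr)

lemma lik_meas:
  assumes s: "\<sigma> \<in> borel_measurable borel"
  shows "(\<lambda>W. likelihood k d n \<Delta> \<sigma> X Y W) \<in> borel_measurable (mat_space k d)"
proof -
  have inner: "(\<lambda>W. \<Sum>l<d. W (j,l) * x l) \<in> borel_measurable (mat_space k d)" if "j < k" for j x
    by (intro borel_measurable_sum borel_measurable_times borel_measurable_const meas_entry) (use that in auto)
  have no: "(\<lambda>W. net_out k d \<sigma> W x) \<in> borel_measurable (mat_space k d)" for x
    unfolding net_out_def
    by (intro borel_measurable_sum borel_measurable_times borel_measurable_const measurable_compose[OF inner s]) auto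
  have a: "(\<lambda>W. - (Y \<mu> - net_out k d \<sigma> W (\<lambda>l. X (\<mu>,l)))\<^sup>2 / (2 * \<Delta>)) \<in> borel_measurable (mat_space k d)" for \<mu>
    by (intro borel_measurable_divide borel_measurable_uminus
        borel_measurable_power borel_measurable_diff borel_measurable_const no)
  have b: "(\<lambda>W. exp (- (Y \<mu> - net_out k d \<sigma> W (\<lambda>l. X (\<mu>,l)))\<^sup>2 / (2 * \<Delta>))) \<in> borel_measurable (mat_space k d)" for \<mu>
    using measurable_compose[OF a borel_measurable_exp] by (simp add: comp_def)
  show ?thesis
    unfolding likelihood_def
    by (intro borel_measurable_prod b)
qed

lemma lik_bounds: "0 \<le> likelihood k d n \<Delta> \<sigma> X Y W \<and> likelihood k d n \<Delta> \<sigma> X Y W \<le> 1"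
  if "0 < \<Delta>"
proof -
  have e: "0 \<le> exp (- (Y \<mu> - net_out k d \<sigma> W (\<lambda>l. X (\<mu>,l)))\<^sup>2 / (2 * \<Delta>)) \<and>
           exp (- (Y \<mu> - net_out k d \<sigma> W (\<lambda>l. X (\<mu>,l)))\<^sup>2 / (2 * \<Delta>)) \<le> 1" for \<mu>
    using that by (auto simp: divide_nonpos_pos)
  show ?thesis unfolding likelihood_def using e by (auto intro: prod_nonneg prod_le_1)
qed

lemma dens_bound:
  assumes u: "uniform_stiefel k d \<nu>" and s: "\<sigma> \<in> borel_measurable borel" and D: "0 < \<Delta>"
  shows "(\<integral>\<^sup>+W. ennreal (likelihood k d n \<Delta> \<sigma> X Y W / (\<integral>W'. likelihood k d n \<Delta> \<sigma> X Y W' \<partial>\<nu>)) \<partial>\<nu>) \<le> 1"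
proof -
  interpret prob_space \<nu> using us_prob[OF u] .
  let ?L = "\<lambda>W. likelihood k d n \<Delta> \<sigma> X Y W"
  define c where "c = (\<integral>W'. ?L W' \<partial>\<nu>)"
  have Lm: "?L \<in> borel_measurable \<nu>" unfolding us_meas_cong[OF u] by (rule lik_meas[OF s])
  have int: "integrable \<nu> ?L"
    by (rule integrable_const_bound[where B=1]) (use lik_bounds[OF D] Lm in auto)
  have c0: "0 \<le> c" unfolding c_def by (rule integral_nonneg_AE) (use lik_bounds[OF D] in auto)
  have "(\<integral>\<^sup>+W. ennreal (?L W / c) \<partial>\<nu>) = ennreal (\<integral>W. ?L W / c \<partial>\<nu>)"
    by (rule nn_integral_eq_integral) (use int lik_bounds[OF D] c0 in auto)
  also have "\<dots> = ennreal (c / c)" unfolding c_def by simp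
  also have "\<dots> \<le> 1" by (cases "c = 0") auto
  finally show ?thesis unfolding c_def .
qed

lemma inner_bound:
  assumes u: "uniform_stiefel k d \<nu>" and k2: "2 \<le> k" and s: "\<sigma> \<in> borel_measurable borel" and D: "0 < \<Delta>"
    and W0: "W0 \<in> stiefel k d" and ij: "i < k" "j < k" "i \<noteq> j"
  shows "(\<integral>\<^sup>+W1. ennreal ((\<Sum>l<d. W0 (i,l) * W1 (j,l))\<^sup>2) \<partial>posterior k d n \<Delta> \<sigma> \<nu> X Y) \<le> ennreal (2 / real k)"
proof -
  interpret prob_space \<nu> using us_prob[OF u] .
  have k: "0 < k" using k2 by simp
  let ?L = "\<lambda>W. likelihood k d n \<Delta> \<sigma> X Y W"
  define c where "c = (\<integral>W'. ?L W' \<partial>\<nu>)"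
  define dens where "dens W = ennreal (?L W / c)" for W
  define f where "f j' (W::nat\<times>nat\<Rightarrow>real) = ennreal ((\<Sum>l<d. W0 (i,l) * W (j',l))\<^sup>2)" for j' W
  define I where "I j' = (\<integral>\<^sup>+W. dens W * f j' W \<partial>\<nu>)" for j'
  have Lm: "?L \<in> borel_measurable (mat_space k d)" by (rule lik_meas[OF s])
  have densm: "dens \<in> borel_measurable (mat_space k d)"
    unfolding dens_def by (intro measurable_compose[OF _ measurable_ennreal] borel_measurable_divide Lm borel_measurable_const)
  have fm: "f j' \<in> borel_measurable (mat_space k d)" if "j' < k" for j'
    unfolding f_def
    by (intro measurable_compose[OF _ measurable_ennreal] borel_measurable_power borel_measurable_sum
        borel_measurable_times borel_measurable_const meas_entry) (use that in auto)
  have post: "posterior k d n \<Delta> \<sigma> \<nu> X Y = density \<nu> dens" unfolding posterior_def dens_def c_def ..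
  have lhs: "(\<integral>\<^sup>+W1. ennreal ((\<Sum>l<d. W0 (i,l) * W1 (j,l))\<^sup>2) \<partial>posterior k d n \<Delta> \<sigma> \<nu> X Y) = I j"
    unfolding post I_def f_def[symmetric]
    by (rule nn_integral_density) (use densm fm[OF ij(2)] us_meas_cong[OF u] in auto)
  have Ieq: "I j' = I j" if j': "j' < k" "j' \<noteq> i" for j'
  proof (cases "j' = j")
    case False
    have g: "(\<lambda>W. dens W * f j' W) \<in> borel_measurable (mat_space k d)"
      using densm fm[OF j'(1)] by (intro borel_measurable_times_ennreal)
    have "(\<integral>\<^sup>+W. dens (swr k d j j' W) * f j' (swr k d j j' W) \<partial>\<nu>) = (\<integral>\<^sup>+W. dens W * f j' W \<partial>\<nu>)"
      by (rule swap_int[OF u k ij(2) j'(1) False[symmetric] g])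
    moreover have "dens (swr k d j j' W) * f j' (swr k d j j' W) = dens W * f j W" for W
    proof -
      have "dens (swr k d j j' W) = dens W" unfolding dens_def using lik_swr[OF ij(2) j'(1)] by simp
      moreover have "f j' (swr k d j j' W) = f j W"
      proof -
        have "(\<Sum>l<d. W0 (i,l) * swr k d j j' W (j',l)) = (\<Sum>l<d. W0 (i,l) * W (j,l))"
          using j' ij by (intro sum.cong) (auto simp: swr_def sw_def)
        then show ?thesis unfolding f_def by simp
      qed
      ultimately show ?thesis by simp
    qed
    ultimately show ?thesis unfolding I_def by simp
  qed simp
  have dfm: "(\<lambda>W. dens W * f j' W) \<in> borel_measurable \<nu>" if "j' < k" for j'
    unfolding us_meas_cong[OF u] by (intro borel_measurable_times_ennreal densm fm that)
  define J where "J = {..<k} - {i}"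
  have cardJ: "card J = k - 1" unfolding J_def using ij by simp
  have "of_nat (k - 1) * I j = (\<Sum>j'\<in>J. I j')"
    using Ieq cardJ unfolding J_def by simp
  also have "\<dots> = (\<integral>\<^sup>+W. (\<Sum>j'\<in>J. dens W * f j' W) \<partial>\<nu>)"
    unfolding I_def J_def
    by (rule nn_integral_sum[symmetric]) (auto intro: dfm)
  also have "\<dots> \<le> (\<integral>\<^sup>+W. dens W \<partial>\<nu>)"
  proof (rule nn_integral_mono_AE)
    show "AE W in \<nu>. (\<Sum>j'\<in>J. dens W * f j' W) \<le> dens W"
      using us_AE[OF u]
    proof eventually_elim
      case (elim W)
      have o: "orthn d k (\<lambda>j l. W (j,l))" unfolding orthn_def using stiefel_dot[OF elim] by auto
      have x1: "dotv d (\<lambda>l. W0 (i,l)) (\<lambda>l. W0 (i,l)) = 1" using stiefel_dot[OF W0 ij(1) ij(1)] by simp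
      have "(\<Sum>j'\<in>J. (\<Sum>l<d. W0 (i,l) * W (j',l))\<^sup>2) \<le> (\<Sum>j'<k. (\<Sum>l<d. W0 (i,l) * W (j',l))\<^sup>2)"
        unfolding J_def by (rule sum_mono2) auto
      also have "\<dots> = (\<Sum>j'<k. (dotv d (\<lambda>l. W0 (i,l)) (\<lambda>l. W (j',l)))\<^sup>2)" unfolding dotv_def ..
      also have "\<dots> \<le> 1" using bessel[OF o, of "\<lambda>l. W0 (i,l)"] x1 by simp
      finally have s1: "(\<Sum>j'\<in>J. (\<Sum>l<d. W0 (i,l) * W (j',l))\<^sup>2) \<le> 1" .
      have e: "(\<Sum>j'\<in>J. f j' W) \<le> 1" using s1 unfolding f_def by simp
      have "(\<Sum>j'\<in>J. dens W * f j' W) = dens W * (\<Sum>j'\<in>J. f j' W)" by (simp add: sum_distrib_left)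
      also have "\<dots> \<le> dens W * 1" by (rule mult_left_mono[OF e]) simp
      finally show ?case by simp
    qed
  qed
  also have "\<dots> \<le> 1" unfolding dens_def c_def by (rule dens_bound[OF u s D])
  finally have bnd: "of_nat (k - 1) * I j \<le> 1" .
  have "ennreal (real k / 2) \<le> of_nat (k - 1)"
  proof -
    have "real k / 2 \<le> real (k - 1)" using k2 by (simp add: of_nat_diff)
    then show ?thesis by (simp add: ennreal_of_nat_eq_real_of_nat)
  qed
  then have bnd2: "ennreal (real k / 2) * I j \<le> 1" using bnd by (meson mult_right_mono order_trans zero_le)
  have "I j = ennreal (2 / real k) * (ennreal (real k / 2) * I j)"
  proof -
    have "ennreal (2 / real k) * ennreal (real k / 2) = 1" using k by (simp add: ennreal_mult[symmetric])
    then show ?thesis by (simp add: mult.assoc[symmetric])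
  qed
  also have "\<dots> \<le> ennreal (2 / real k) * 1" using bnd2 by (intro mult_left_mono) auto
  finally show ?thesis using lhs by simp
qed

theorem mainTheorem2:
  shows "\<exists>C>0. \<forall>(d::nat) (k::nat) (n::nat) (\<Delta>::real) (\<sigma>::real \<Rightarrow> real) \<nu> (i::nat) (j::nat).
     2 \<le> k \<longrightarrow> k \<le> d \<longrightarrow> 1 \<le> n \<longrightarrow> 0 < \<Delta> \<longrightarrow>
     \<sigma> \<in> borel_measurable borel \<longrightarrow> uniform_stiefel k d \<nu> \<longrightarrow>
     i < k \<longrightarrow> j < k \<longrightarrow> i \<noteq> j \<longrightarrow>
     (\<integral>\<^sup>+ W0. \<integral>\<^sup>+ X. \<integral>\<^sup>+ Z.
        (\<integral>\<^sup>+ W1. ennreal ((\<Sum>l<d. W0 (i,l) * W1 (j,l))\<^sup>2)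
            \<partial>posterior k d n \<Delta> \<sigma> \<nu> X (labels k d \<Delta> \<sigma> W0 X Z))
        \<partial>gauss_iid {..<n} \<partial>gauss_iid ({..<n} \<times> {..<d}) \<partial>\<nu>)
     \<le> ennreal (C / real k)"
proof (intro exI[of _ 2] conjI allI impI)
  show "(0::real) < 2" by simp
next
  fix d k n :: nat and \<Delta> :: real and \<sigma> :: "real \<Rightarrow> real" and \<nu> and i j :: nat
  assume k2: "2 \<le> k" and kd: "k \<le> d" and n1: "1 \<le> n" and D: "0 < \<Delta>"
    and s: "\<sigma> \<in> borel_measurable borel" and u: "uniform_stiefel k d \<nu>"
    and i: "i < k" and j: "j < k" and ij: "i \<noteq> j"
  interpret N: prob_space \<nu> using us_prob[OF u] .
  have gp1: "prob_space (gauss_iid ({..<n}::nat set))"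
    unfolding gauss_iid_def N01_def by (intro prob_space_PiM prob_space_normal_density) simp
  have gp2: "prob_space (gauss_iid ({..<n} \<times> {..<d}))"
    unfolding gauss_iid_def N01_def by (intro prob_space_PiM prob_space_normal_density) simp
  have Zb: "(\<integral>\<^sup>+ Z. (\<integral>\<^sup>+ W1. ennreal ((\<Sum>l<d. W0 (i,l) * W1 (j,l))\<^sup>2)
            \<partial>posterior k d n \<Delta> \<sigma> \<nu> X (labels k d \<Delta> \<sigma> W0 X Z)) \<partial>gauss_iid {..<n})
        \<le> ennreal (2 / real k)" if W0: "W0 \<in> stiefel k d" for W0 X
  proof -
    have "(\<integral>\<^sup>+ Z. (\<integral>\<^sup>+ W1. ennreal ((\<Sum>l<d. W0 (i,l) * W1 (j,l))\<^sup>2)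
            \<partial>posterior k d n \<Delta> \<sigma> \<nu> X (labels k d \<Delta> \<sigma> W0 X Z)) \<partial>gauss_iid {..<n})
        \<le> (\<integral>\<^sup>+ Z. ennreal (2 / real k) \<partial>gauss_iid {..<n})"
      by (rule nn_integral_mono) (rule inner_bound[OF u k2 s D W0 i j ij])
    also have "\<dots> = ennreal (2 / real k)"
      using prob_space.emeasure_space_1[OF gp1] by simp
    finally show ?thesis .
  qed
  have Xb: "(\<integral>\<^sup>+ X. \<integral>\<^sup>+ Z. (\<integral>\<^sup>+ W1. ennreal ((\<Sum>l<d. W0 (i,l) * W1 (j,l))\<^sup>2)
            \<partial>posterior k d n \<Delta> \<sigma> \<nu> X (labels k d \<Delta> \<sigma> W0 X Z)) \<partial>gauss_iid {..<n} \<partial>gauss_iid ({..<n} \<times> {..<d}))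
        \<le> ennreal (2 / real k)" if W0: "W0 \<in> stiefel k d" for W0
  proof -
    have "(\<integral>\<^sup>+ X. \<integral>\<^sup>+ Z. (\<integral>\<^sup>+ W1. ennreal ((\<Sum>l<d. W0 (i,l) * W1 (j,l))\<^sup>2)
            \<partial>posterior k d n \<Delta> \<sigma> \<nu> X (labels k d \<Delta> \<sigma> W0 X Z)) \<partial>gauss_iid {..<n} \<partial>gauss_iid ({..<n} \<times> {..<d}))
        \<le> (\<integral>\<^sup>+ X. ennreal (2 / real k) \<partial>gauss_iid ({..<n} \<times> {..<d}))"
      by (rule nn_integral_mono) (rule Zb[OF W0])
    also have "\<dots> = ennreal (2 / real k)"
      using prob_space.emeasure_space_1[OF gp2] by simp
    finally show ?thesis .
  qed
  have "(\<integral>\<^sup>+ W0. \<integral>\<^sup>+ X. \<integral>\<^sup>+ Z.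
        (\<integral>\<^sup>+ W1. ennreal ((\<Sum>l<d. W0 (i,l) * W1 (j,l))\<^sup>2)
            \<partial>posterior k d n \<Delta> \<sigma> \<nu> X (labels k d \<Delta> \<sigma> W0 X Z))
        \<partial>gauss_iid {..<n} \<partial>gauss_iid ({..<n} \<times> {..<d}) \<partial>\<nu>)
     \<le> (\<integral>\<^sup>+ W0. ennreal (2 / real k) \<partial>\<nu>)"
    by (rule nn_integral_mono_AE, rule AE_mp[OF us_AE[OF u]], rule AE_I2) (auto intro: Xb)
  also have "\<dots> = ennreal (2 / real k)" using N.emeasure_space_1 by simp
  finally show "(\<integral>\<^sup>+ W0. \<integral>\<^sup>+ X. \<integral>\<^sup>+ Z.
        (\<integral>\<^sup>+ W1. ennreal ((\<Sum>l<d. W0 (i,l) * W1 (j,l))\<^sup>2)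
            \<partial>posterior k d n \<Delta> \<sigma> \<nu> X (labels k d \<Delta> \<sigma> W0 X Z))
        \<partial>gauss_iid {..<n} \<partial>gauss_iid ({..<n} \<times> {..<d}) \<partial>\<nu>)
     \<le> ennreal (2 / real k)" .
qed

end
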